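(* Let $K\ge 2$ users be served by a base-station with a uniform planar array of $M=M_xM_y$ antennas ($M_x$ antennas along the $x$-axis with spacing $d_x$, $M_y$ along the $y$-axis with spacing $d_y$), at wavelength $\lambda$. For an angle pair $\boldsymbol{\theta}=(\theta_x,\theta_y)$ let $\mathbf{a}(\boldsymbol{\theta})\in\mathbb{C}^{M}$ be the vector with entries $$[\mathbf{a}(\boldsymbol\theta)]_{(m_x,m_y)}=e^{j\frac{2\pi}{\lambda}\left(d_x m_x\sin\theta_x+d_y m_y\sin\theta_y\right)},\quad m_x=0,\dots,M_x-1,\ m_y=0,\dots,M_y-1.$$ The channel of user $k$ is $\mathbf{h}_k=\sum_{l=1}^{L}\beta_{k,l}e^{j\phi_{k,l}}\mathbf{a}(\boldsymbol\theta_{k,l})$, where the path gains $\beta_{k,l}$ are constants, the path phases $\phi_{k,l}$ are i.i.d. uniform on $[0,2\pi]$ and independent of all path angles. Fix two users $k\neq k'$, and assume that for every pair of paths $(l,l')$, $\sin\theta_{x,k,l}-\sin\theta_{x,k',l'}$ is uniformly distributed on $[-\alpha_{x,l,l'},\alpha_{x,l,l'}]$ and $\sin\theta_{y,k,l}-\sin\theta_{y,k',l'}$ is uniformly distributed on $[-\alpha_{y,l,l'},\alpha_{y,l,l'}]$, independently of the former, with $\alpha_{x,l,l'},\alpha_{y,l,l'}\in[0,1]$. Then $$\operatorname{Var}\left[\frac{1}{M}\mathbf{h}_k^H\mathbf{h}_{k'}\right]=\sum_{l=1}^{L}\sum_{l'=1}^{L}\left(\beta_{k,l}\beta_{k',l'}\right)^2\,\eta\!\left(\frac{d_x\alpha_{x,l,l'}}{\lambda},M_x\right)\eta\!\left(\frac{d_y\alpha_{y,l,l'}}{\lambda},M_y\right),$$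 where $\eta(c,N)=\frac{1}{N^2}\sum_{m_1=0}^{N-1}\sum_{m_2=0}^{N-1}\operatorname{sinc}\left(2\pi c(m_1-m_2)\right)$.
   Context: $\operatorname{sinc}(x)=\sin(x)/x$ for $x\neq 0$ and $\operatorname{sinc}(0)=1$. For a complex random variable $Z$, $\operatorname{Var}[Z]=\mathbb{E}|Z|^2-|\mathbb{E}Z|^2$. $(\cdot)^H$ denotes conjugate transpose. A uniform distribution on $[-0,0]$ means the corresponding difference is $0$ almost surely. *)

theory Defs
  imports "HOL-Probability.Probability"
begin

text \<open>sinc(x) = sin x / x for x ~= 0, sinc 0 = 1 (abbreviation from HOL-Probability.Sinc_Integral).\<close>

definition cvar :: "'a measure \<Rightarrow> ('a \<Rightarrow> complex) \<Rightarrow> real" where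
  "cvar M Z = (\<integral>\<omega>. (cmod (Z \<omega>))\<^sup>2 \<partial>M) - (cmod (\<integral>\<omega>. Z \<omega> \<partial>M))\<^sup>2"

definition sym_uniform :: "'a measure \<Rightarrow> ('a \<Rightarrow> real) \<Rightarrow> real \<Rightarrow> bool" where
  "sym_uniform M X a \<longleftrightarrow>
     distr M lborel X = (if a = 0 then return lborel 0 else uniform_measure lborel {-a..a})"

definition steer :: "real \<Rightarrow> real \<Rightarrow> real \<Rightarrow> real \<Rightarrow> real \<Rightarrow> nat \<times> nat \<Rightarrow> complex" where
  "steer lam dx dy tx ty m =
     exp (\<i> * complex_of_real (2 * pi / lam * (dx * real (fst m) * sin tx + dy * real (snd m) * sin ty)))"

definition eta :: "real \<Rightarrow> nat \<Rightarrow> real" where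
  "eta c N = (1 / (real N)\<^sup>2) *
     (\<Sum>m1<N. \<Sum>m2<N. sinc (2 * pi * c * (real m1 - real m2)))"

end

theory Submission
  imports Defs
begin


lemma unif_integral:
  fixes f :: "real \<Rightarrow> complex"
  assumes "a < b" "continuous_on UNIV f"
  shows "integral\<^sup>L (uniform_measure lborel {a..b}) f
     = (\<integral>x. indicator {a..b} x *\<^sub>R f x \<partial>lborel) / of_real (b - a)"
proof -
  have fm: "f \<in> borel_measurable lborel" using borel_measurable_continuous_onI[OF assms(2)] by simp
  have eq: "(\<lambda>x. indicator {a..b} x / emeasure lborel {a..b}) = (\<lambda>x. ennreal (indicator {a..b} x / (b - a)))"
  proof
    fix x
    show "indicator {a..b} x / emeasure lborel {a..b} = ennreal (indicator {a..b} x / (b - a))"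
      using assms(1) divide_ennreal[of 1 "b - a"] by (cases "x \<in> {a..b}") auto
  qed
  have "integral\<^sup>L (uniform_measure lborel {a..b}) f = integral\<^sup>L lborel (\<lambda>x. (indicator {a..b} x / (b - a)) *\<^sub>R f x)"
    unfolding uniform_measure_def eq
    by (rule integral_density) (use fm assms(1) in auto)
  also have "\<dots> = integral\<^sup>L lborel (\<lambda>x. (1 / (b - a)) *\<^sub>R (indicator {a..b} x *\<^sub>R f x))"
    by (simp add: divide_inverse mult.commute)
  also have "\<dots> = (\<integral>x. indicator {a..b} x *\<^sub>R f x \<partial>lborel) / of_real (b - a)"
    by (simp add: scaleR_conv_of_real divide_inverse mult.commute)
  finally show ?thesis .
qed

lemma FTC_iexp:
  fixes c a b :: real
  assumes "c \<noteq> 0" "a \<le> b"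
  shows "(\<integral>x. indicator {a..b} x *\<^sub>R exp (\<i> * of_real (c * x)) \<partial>lborel)
       = (exp (\<i> * of_real (c * b)) - exp (\<i> * of_real (c * a))) / (\<i> * of_real c)"
proof -
  have "(\<integral>x. indicator {a..b} x *\<^sub>R exp (\<i> * of_real (c * x)) \<partial>lborel)
      = exp (\<i> * of_real (c * b)) / (\<i> * of_real c) - exp (\<i> * of_real (c * a)) / (\<i> * of_real c)"
  proof (rule integral_FTC_atLeastAtMost[OF assms(2)])
    fix x assume "a \<le> x" "x \<le> b"
    have d: "((\<lambda>z. exp (\<i> * of_real c * z) / (\<i> * of_real c)) has_field_derivative
           exp (\<i> * of_real c * of_real x)) (at (of_real x))"
      using assms(1) by (auto intro!: derivative_eq_intros)
    show "((\<lambda>x. exp (\<i> * of_real (c * x)) / (\<i> * of_real c)) has_vector_derivative exp (\<i> * of_real (c * x))) (at x within {a..b})"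
      using has_vector_derivative_real_field[OF d] by (simp add: mult.assoc)
  next
    show "continuous_on {a..b} (\<lambda>x. exp (\<i> * complex_of_real (c * x)))"
      by (intro continuous_intros)
  qed
  then show ?thesis by (simp add: diff_divide_distrib)
qed

lemma unif_const1:
  assumes "(a::real) < b"
  shows "integral\<^sup>L (uniform_measure lborel {a..b}) (\<lambda>x. 1::complex) = 1"
proof -
  interpret P: prob_space "uniform_measure lborel {a..b}"
    by (rule prob_space_uniform_measure) (use assms emeasure_lborel_Icc[of a b] in auto)
  show ?thesis using P.prob_space by simp
qed

lemma exp_i_real: "exp (\<i> * complex_of_real t) = complex_of_real (cos t) + \<i> * complex_of_real (sin t)"
  by (simp add: exp_Euler cos_of_real sin_of_real)

lemma phase_unif_int:
  fixes n :: int
  shows "integral\<^sup>L (uniform_measure lborel {0..2*pi}) (\<lambda>x. exp (\<i> * of_real (of_int n * x))) = (if n = 0 then 1 else 0)"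
proof (cases "n = 0")
  case True
  then show ?thesis using unif_const1[of 0 "2*pi"] by simp
next
  case False
  have c: "exp (\<i> * of_real (of_int n * (2 * pi))) = 1"
    using exp_i_real[of "of_int n * (2 * pi)"] cos_int_2pin[of n] sin_int_2pin[of n]
    by (simp add: mult.commute)
  have "integral\<^sup>L (uniform_measure lborel {0..2*pi}) (\<lambda>x. exp (\<i> * of_real (of_int n * x)))
     = (\<integral>x. indicator {0..2*pi} x *\<^sub>R exp (\<i> * of_real (of_int n * x)) \<partial>lborel) / of_real (2*pi - 0)"
    by (rule unif_integral) (auto intro!: continuous_intros)
  also have "\<dots> = 0"
    by (subst FTC_iexp) (use False c in \<open>auto\<close>)
  finally show ?thesis using False by simp
qed

lemma sinc_unif:
  fixes c a :: real
  assumes "a > 0"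
  shows "integral\<^sup>L (uniform_measure lborel {-a..a}) (\<lambda>x. exp (\<i> * of_real (c * x))) = of_real (sinc (c * a))"
proof (cases "c = 0")
  case True
  then show ?thesis using unif_const1[of "-a" a] assms by simp
next
  case False
  have "integral\<^sup>L (uniform_measure lborel {-a..a}) (\<lambda>x. exp (\<i> * of_real (c * x)))
     = (\<integral>x. indicator {-a..a} x *\<^sub>R exp (\<i> * of_real (c * x)) \<partial>lborel) / of_real (a - - a)"
    by (rule unif_integral) (use assms in \<open>auto intro!: continuous_intros\<close>)
  also have "\<dots> = ((exp (\<i> * of_real (c * a)) - exp (\<i> * of_real (c * - a))) / (\<i> * of_real c)) / of_real (2 * a)"
    by (subst FTC_iexp) (use False assms in auto)
  also have "\<dots> = of_real (sin (c * a) / (c * a))"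
  proof -
    have e1: "exp (\<i> * of_real (c * a)) = of_real (cos (c*a)) + \<i> * of_real (sin (c*a))" by (rule exp_i_real)
    have e2: "exp (\<i> * of_real (c * - a)) = of_real (cos (c*a)) - \<i> * of_real (sin (c*a))"
      using exp_i_real[of "c * -a"] by simp
    show ?thesis unfolding e1 e2 using False assms by (simp add: field_simps)
  qed
  finally show ?thesis using False assms by simp
qed



lemma (in prob_space) E_sinc:
  assumes X: "X \<in> borel_measurable M" and su: "sym_uniform M X a" and a: "a \<ge> 0"
  shows "(\<integral>\<omega>. exp (\<i> * of_real (c * X \<omega>)) \<partial>M) = of_real (sinc (c * a))"
proof -
  have "(\<integral>\<omega>. exp (\<i> * of_real (c * X \<omega>)) \<partial>M) = integral\<^sup>L (distr M lborel X) (\<lambda>x. exp (\<i> * of_real (c * x)))"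
    by (subst integral_distr) (use X in auto)
  also have "\<dots> = of_real (sinc (c * a))"
  proof (cases "a = 0")
    case True
    then show ?thesis using su unfolding sym_uniform_def
      by (simp add: integral_return)
  next
    case False
    then have "distr M lborel X = uniform_measure lborel {-a..a}" using su unfolding sym_uniform_def by simp
    then show ?thesis using sinc_unif[of a c] False a by simp
  qed
  finally show ?thesis .
qed

lemma (in prob_space) E_phase:
  assumes X: "X \<in> borel_measurable M" and u: "distr M lborel X = uniform_measure lborel {0..2*pi}"
  shows "(\<integral>\<omega>. exp (\<i> * of_real (of_int n * X \<omega>)) \<partial>M) = (if n = 0 then 1 else 0)"
proof -
  have "(\<integral>\<omega>. exp (\<i> * of_real (of_int n * X \<omega>)) \<partial>M) = integral\<^sup>L (distr M lborel X) (\<lambda>x. exp (\<i> * of_real (of_int n * x)))"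
    by (subst integral_distr) (use X in auto)
  also have "\<dots> = (if n = 0 then 1 else 0)"
    unfolding u by (rule phase_unif_int)
  finally show ?thesis .
qed

lemma (in prob_space) bounded_integrable:
  fixes f :: "'a \<Rightarrow> complex"
  assumes "f \<in> borel_measurable M" "\<And>\<omega>. norm (f \<omega>) \<le> B"
  shows "integrable M f"
  by (rule integrable_const_bound[where B=B]) (use assms in auto)

lemma (in prob_space) E_phases:
  fixes \<phi> :: "'i \<Rightarrow> 'a \<Rightarrow> real" and n :: "'i \<Rightarrow> int"
  assumes fin: "finite I" and ind: "indep_vars (\<lambda>_. borel) \<phi> I"
    and u: "\<And>i. i \<in> I \<Longrightarrow> distr M lborel (\<phi> i) = uniform_measure lborel {0..2*pi}"
  shows "(\<integral>\<omega>. exp (\<i> * of_real (\<Sum>i\<in>I. of_int (n i) * \<phi> i \<omega>)) \<partial>M) = (if \<forall>i\<in>I. n i = 0 then 1 else 0)"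
proof -
  have rv: "\<And>i. i \<in> I \<Longrightarrow> \<phi> i \<in> borel_measurable M"
    using ind unfolding indep_vars_def by auto
  have eq: "\<And>\<omega>. exp (\<i> * of_real (\<Sum>i\<in>I. of_int (n i) * \<phi> i \<omega>)) = (\<Prod>i\<in>I. exp (\<i> * of_real (of_int (n i) * \<phi> i \<omega>)))"
    using fin by (simp add: sum_distrib_left exp_sum)
  have ind2: "indep_vars (\<lambda>_. borel) (\<lambda>i \<omega>. exp (\<i> * of_real (of_int (n i) * \<phi> i \<omega>))) I"
    by (rule indep_vars_compose2[OF ind]) (auto intro!: borel_measurable_continuous_onI continuous_intros)
  have "(\<integral>\<omega>. exp (\<i> * of_real (\<Sum>i\<in>I. of_int (n i) * \<phi> i \<omega>)) \<partial>M)
      = (\<Prod>i\<in>I. \<integral>\<omega>. exp (\<i> * of_real (of_int (n i) * \<phi> i \<omega>)) \<partial>M)"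
    unfolding eq
    by (rule indep_vars_lebesgue_integral[OF fin ind2])
       (auto intro!: bounded_integrable[where B=1] borel_measurable_continuous_on[OF _ rv] continuous_intros)
  also have "\<dots> = (\<Prod>i\<in>I. if n i = 0 then 1 else 0)"
    by (intro prod.cong refl E_phase) (auto simp: rv u)
  also have "\<dots> = (if \<forall>i\<in>I. n i = 0 then 1 else 0)"
    using fin by (auto simp: prod_zero_iff)
  finally show ?thesis .
qed



lemma measurable_cis[measurable]: "f \<in> borel_measurable N \<Longrightarrow> (\<lambda>x. cis (f x)) \<in> borel_measurable N"
  by (rule borel_measurable_continuous_on[where f=cis]) (auto intro: continuous_intros)

lemma measurable_cnj[measurable]: "f \<in> borel_measurable N \<Longrightarrow> (\<lambda>x. cnj (f x)) \<in> borel_measurable N"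
  by (rule borel_measurable_continuous_on[where f=cnj]) (auto intro: continuous_intros)

lemma exp_i_cis: "exp (\<i> * complex_of_real t) = cis t"
  by (simp add: cis_conv_exp)

lemma sinc_neg: "sinc (- t) = sinc t"
  by simp

lemma sinc_arg: "sinc (- (2 * pi / lam * d * (a - b)) * \<alpha>) = sinc (2 * pi * (d * \<alpha> / lam) * (a - b))"
proof -
  have "- (2 * pi / lam * d * (a - b)) * \<alpha> = - (2 * pi * (d * \<alpha> / lam) * (a - b))"
    by (simp add: algebra_simps)
  then show ?thesis by (simp only: sinc_neg)
qed

lemma sum_sq_prod:
  fixes f g :: "nat \<Rightarrow> nat \<Rightarrow> real"
  shows "(\<Sum>m1\<in>A \<times> B. \<Sum>m2\<in>A \<times> B. f (fst m1) (fst m2) * g (snd m1) (snd m2))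
       = (\<Sum>a1\<in>A. \<Sum>a2\<in>A. f a1 a2) * (\<Sum>b1\<in>B. \<Sum>b2\<in>B. g b1 b2)"
proof -
  have "(\<Sum>m1\<in>A \<times> B. \<Sum>m2\<in>A \<times> B. f (fst m1) (fst m2) * g (snd m1) (snd m2))
      = (\<Sum>a1\<in>A. \<Sum>b1\<in>B. \<Sum>a2\<in>A. \<Sum>b2\<in>B. f a1 a2 * g b1 b2)"
  proof -
    have split: "\<And>F. (\<Sum>m\<in>A \<times> B. F m) = (\<Sum>a\<in>A. \<Sum>b\<in>B. F (a, b))"
      by (simp add: sum.cartesian_product)
    show ?thesis by (simp only: split fst_conv snd_conv)
  qed
  also have "\<dots> = (\<Sum>a1\<in>A. \<Sum>a2\<in>A. \<Sum>b1\<in>B. \<Sum>b2\<in>B. f a1 a2 * g b1 b2)"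
    by (rule sum.cong[OF refl]) (rule sum.swap)
  also have "\<dots> = (\<Sum>a1\<in>A. \<Sum>a2\<in>A. f a1 a2 * (\<Sum>b1\<in>B. \<Sum>b2\<in>B. g b1 b2))"
    by (simp only: sum_distrib_left)
  also have "\<dots> = (\<Sum>a1\<in>A. \<Sum>a2\<in>A. f a1 a2) * (\<Sum>b1\<in>B. \<Sum>b2\<in>B. g b1 b2)"
    by (simp only: sum_distrib_right)
  finally show ?thesis .
qed



theorem proposition1:
  fixes M :: "'a measure"
    and K L Mx My k k' :: nat
    and lam dx dy :: real
    and \<beta> :: "nat \<Rightarrow> nat \<Rightarrow> real"
    and \<phi> \<theta>x \<theta>y :: "nat \<Rightarrow> nat \<Rightarrow> 'a \<Rightarrow> real"
    and \<alpha>x \<alpha>y :: "nat \<Rightarrow> nat \<Rightarrow> real"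
  defines "I \<equiv> {..<K} \<times> {1..L}"
    and "h \<equiv> (\<lambda>u \<omega> m. \<Sum>l\<in>{1..L}. complex_of_real (\<beta> u l) * exp (\<i> * complex_of_real (\<phi> u l \<omega>))
                 * steer lam dx dy (\<theta>x u l \<omega>) (\<theta>y u l \<omega>) m)"
  assumes "prob_space M"
    and "K \<ge> 2" and "k < K" and "k' < K" and "k \<noteq> k'"
    and "Mx > 0" and "My > 0" and "lam > 0" and "dx > 0" and "dy > 0"
    and angles_rv: "\<And>u l. (u, l) \<in> I \<Longrightarrow> \<theta>x u l \<in> borel_measurable M \<and> \<theta>y u l \<in> borel_measurable M"
    and phases_indep: "prob_space.indep_vars M (\<lambda>_. borel) (\<lambda>i. \<phi> (fst i) (snd i)) I"
    and phases_unif: "\<And>u l. (u, l) \<in> I \<Longrightarrow> distr M lborel (\<phi> u l) = uniform_measure lborel {0..2 * pi}"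
    and phases_angles_indep:
      "prob_space.indep_var M
         (PiM ({True} \<times> I) (\<lambda>_. borel))
         (\<lambda>\<omega>. \<lambda>j\<in>{True} \<times> I. \<phi> (fst (snd j)) (snd (snd j)) \<omega>)
         (PiM (UNIV \<times> I) (\<lambda>_. borel))
         (\<lambda>\<omega>. \<lambda>j\<in>UNIV \<times> I. if fst j then \<theta>x (fst (snd j)) (snd (snd j)) \<omega>
                                   else \<theta>y (fst (snd j)) (snd (snd j)) \<omega>)"
    and diff_x: "\<And>l l'. l \<in> {1..L} \<Longrightarrow> l' \<in> {1..L} \<Longrightarrow>
       sym_uniform M (\<lambda>\<omega>. sin (\<theta>x k l \<omega>) - sin (\<theta>x k' l' \<omega>)) (\<alpha>x l l')"
    and diff_y: "\<And>l l'. l \<in> {1..L} \<Longrightarrow> l' \<in> {1..L} \<Longrightarrow>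
       sym_uniform M (\<lambda>\<omega>. sin (\<theta>y k l \<omega>) - sin (\<theta>y k' l' \<omega>)) (\<alpha>y l l')"
    and diff_indep: "\<And>l l'. l \<in> {1..L} \<Longrightarrow> l' \<in> {1..L} \<Longrightarrow>
       prob_space.indep_var M
         borel (\<lambda>\<omega>. sin (\<theta>x k l \<omega>) - sin (\<theta>x k' l' \<omega>))
         borel (\<lambda>\<omega>. sin (\<theta>y k l \<omega>) - sin (\<theta>y k' l' \<omega>))"
    and alpha_range: "\<And>l l'. l \<in> {1..L} \<Longrightarrow> l' \<in> {1..L} \<Longrightarrow>
       \<alpha>x l l' \<in> {0..1} \<and> \<alpha>y l l' \<in> {0..1}"
  shows "cvar M (\<lambda>\<omega>. (1 / of_nat (Mx * My)) *
            (\<Sum>m\<in>{..<Mx} \<times> {..<My}. cnj (h k \<omega> m) * h k' \<omega> m))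
         = (\<Sum>l\<in>{1..L}. \<Sum>l'\<in>{1..L}. (\<beta> k l * \<beta> k' l')\<^sup>2
              * eta (dx * \<alpha>x l l' / lam) Mx * eta (dy * \<alpha>y l l' / lam) My)"
proof -
  interpret prob_space M by (rule \<open>prob_space M\<close>)
  have finI: "finite I" unfolding I_def by simp
  have kI: "\<And>l. l \<in> {1..L} \<Longrightarrow> (k, l) \<in> I" and k'I: "\<And>l. l \<in> {1..L} \<Longrightarrow> (k', l) \<in> I"
    using \<open>k < K\<close> \<open>k' < K\<close> unfolding I_def by auto
  have rvphi: "\<And>u l. (u, l) \<in> I \<Longrightarrow> \<phi> u l \<in> borel_measurable M"
    using phases_indep unfolding indep_vars_def by fastforce
  define \<Theta> where "\<Theta> = (\<lambda>\<omega>. \<lambda>j\<in>UNIV \<times> I. if fst j then \<theta>x (fst (snd j)) (snd (snd j)) \<omega>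
                                   else \<theta>y (fst (snd j)) (snd (snd j)) \<omega>)"
  define \<Phi> where "\<Phi> = (\<lambda>\<omega>. \<lambda>j\<in>{True} \<times> I. \<phi> (fst (snd j)) (snd (snd j)) \<omega>)"
  have indPT: "indep_var (PiM ({True} \<times> I) (\<lambda>_. borel)) \<Phi> (PiM (UNIV \<times> I) (\<lambda>_. borel)) \<Theta>"
    using phases_angles_indep unfolding \<Theta>_def \<Phi>_def .
  have \<Theta>m: "\<Theta> \<in> measurable M (PiM (UNIV \<times> I) (\<lambda>_. borel))"
    and \<Phi>m: "\<Phi> \<in> measurable M (PiM ({True} \<times> I) (\<lambda>_. borel))"
    using indPT unfolding indep_var_eq by auto
  have KEY: "(\<integral>\<omega>. exp (\<i> * of_real (\<Sum>i\<in>I. of_int (n i) * \<phi> (fst i) (snd i) \<omega>)) * g (\<Theta> \<omega>) \<partial>M)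
      = (if \<forall>i\<in>I. n i = 0 then 1 else 0) * (\<integral>\<omega>. g (\<Theta> \<omega>) \<partial>M)
     \<and> integrable M (\<lambda>\<omega>. exp (\<i> * of_real (\<Sum>i\<in>I. of_int (n i) * \<phi> (fst i) (snd i) \<omega>)) * g (\<Theta> \<omega>))"
    if gm: "g \<in> borel_measurable (PiM (UNIV \<times> I) (\<lambda>_. borel))" and gb: "\<And>x. norm (g x) \<le> B" for n g B
  proof -
    define F where "F = (\<lambda>x::bool\<times>nat\<times>nat \<Rightarrow> real. exp (\<i> * of_real (\<Sum>i\<in>I. of_int (n i) * x (True, i))))"
    have Fm: "F \<in> borel_measurable (PiM ({True} \<times> I) (\<lambda>_. borel))"
      unfolding F_def by measurable
    have FPhi: "\<And>\<omega>. F (\<Phi> \<omega>) = exp (\<i> * of_real (\<Sum>i\<in>I. of_int (n i) * \<phi> (fst i) (snd i) \<omega>))"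
      unfolding F_def \<Phi>_def by (auto intro!: sum.cong arg_cong[where f=exp])
    have ind: "indep_var borel (F \<circ> \<Phi>) borel (g \<circ> \<Theta>)"
      by (rule indep_var_compose[OF indPT Fm gm])
    have i1: "integrable M (F \<circ> \<Phi>)"
      by (rule bounded_integrable[where B=1]) (auto simp: FPhi intro: measurable_comp[OF \<Phi>m Fm])
    have i2: "integrable M (g \<circ> \<Theta>)"
      by (rule bounded_integrable[where B=B]) (auto simp: gb intro: measurable_comp[OF \<Theta>m gm])
    have u: "\<And>i. i \<in> I \<Longrightarrow> distr M lborel (\<phi> (fst i) (snd i)) = uniform_measure lborel {0..2*pi}"
      using phases_unif by auto
    have E: "(\<integral>\<omega>. exp (\<i> * of_real (\<Sum>i\<in>I. of_int (n i) * \<phi> (fst i) (snd i) \<omega>)) \<partial>M) = (if \<forall>i\<in>I. n i = 0 then 1 else 0)"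
      by (rule E_phases[OF finI phases_indep u])
    note r1 = indep_var_lebesgue_integral[OF ind i1 i2, unfolded comp_def FPhi E]
    note r2 = indep_var_integrable[OF ind i1 i2, unfolded comp_def FPhi]
    show ?thesis by (rule conjI[OF r1 r2])
  qed
  define MS where "MS = {..<Mx} \<times> {..<My}"
  define LL where "LL = {1..L} \<times> {1..L}"
  define gA where "gA = (\<lambda>(p::nat\<times>nat) (x::bool\<times>nat\<times>nat \<Rightarrow> real). \<Sum>m\<in>MS.
      cis (- (2 * pi / lam * (dx * real (fst m) * (sin (x (True, k, fst p)) - sin (x (True, k', snd p)))
                             + dy * real (snd m) * (sin (x (False, k, fst p)) - sin (x (False, k', snd p)))))))"
  define nP where "nP = (\<lambda>(p::nat\<times>nat) (i::nat\<times>nat). (if i = (k', snd p) then 1 else 0) - (if i = (k, fst p) then 1 else (0::int)))"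
  define P where "P = (\<lambda>p \<omega>. exp (\<i> * of_real (\<Sum>i\<in>I. of_int (nP p i) * \<phi> (fst i) (snd i) \<omega>)))"
  define c where "c = (\<lambda>p. \<beta> k (fst p) * \<beta> k' (snd p) / real (Mx * My))"
  define Z where "Z = (\<lambda>\<omega>. (1 / of_nat (Mx * My)) * (\<Sum>m\<in>{..<Mx} \<times> {..<My}. cnj (h k \<omega> m) * h k' \<omega> m))"
  have finMS: "finite MS" and finLL: "finite LL" unfolding MS_def LL_def by auto
  have Psimp: "P p \<omega> = cis (\<phi> k' (snd p) \<omega> - \<phi> k (fst p) \<omega>)" if "p \<in> LL" for p \<omega>
  proof -
    have "(\<Sum>i\<in>I. of_int (nP p i) * \<phi> (fst i) (snd i) \<omega>)
        = (\<Sum>i\<in>I. (if i = (k', snd p) then \<phi> (fst i) (snd i) \<omega> else 0)) - (\<Sum>i\<in>I. (if i = (k, fst p) then \<phi> (fst i) (snd i) \<omega> else 0))"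
      unfolding nP_def sum_subtractf[symmetric] by (rule sum.cong) auto
    also have "\<dots> = \<phi> k' (snd p) \<omega> - \<phi> k (fst p) \<omega>"
      using that kI k'I finI unfolding LL_def by (auto simp: sum.delta')
    finally show ?thesis unfolding P_def exp_i_cis by (rule arg_cong[where f=cis])
  qed
  have compm: "(\<lambda>x. x (b, u, l)) \<in> borel_measurable (PiM (UNIV \<times> I) (\<lambda>_. borel))" if "(u, l) \<in> I" for b u l
    using that by (intro measurable_component_singleton) auto
  have gAm: "gA p \<in> borel_measurable (PiM (UNIV \<times> I) (\<lambda>_. borel))" if "p \<in> LL" for p
  proof -
    obtain p1 p2 where pp: "p = (p1, p2)" by force
    with that have "p1 \<in> {1..L}" "p2 \<in> {1..L}" by (auto simp: LL_def)
    note [measurable] = compm[OF kI[OF this(1)]] compm[OF k'I[OF this(2)]]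
    show ?thesis unfolding gA_def pp prod.case fst_conv snd_conv by measurable
  qed
  have gAb: "norm (gA p x) \<le> real (card MS)" for p x
    unfolding gA_def split_beta
    by (rule order.trans[OF norm_sum]) simp
  have gAT: "gA p (\<Theta> \<omega>) = (\<Sum>m\<in>MS. cis (- (2 * pi / lam * (dx * real (fst m) * (sin (\<theta>x k (fst p) \<omega>) - sin (\<theta>x k' (snd p) \<omega>))
                             + dy * real (snd m) * (sin (\<theta>y k (fst p) \<omega>) - sin (\<theta>y k' (snd p) \<omega>))))))"
    if "p \<in> LL" for p \<omega>
    using that kI k'I unfolding gA_def \<Theta>_def LL_def by (auto simp: split_beta)
  have hterm1: "cnj (complex_of_real (\<beta> k (fst p)) * exp (\<i> * complex_of_real (\<phi> k (fst p) \<omega>)) * steer lam dx dy (\<theta>x k (fst p) \<omega>) (\<theta>y k (fst p) \<omega>) m) *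
         (complex_of_real (\<beta> k' (snd p)) * exp (\<i> * complex_of_real (\<phi> k' (snd p) \<omega>)) * steer lam dx dy (\<theta>x k' (snd p) \<omega>) (\<theta>y k' (snd p) \<omega>) m) =
         complex_of_real (\<beta> k (fst p) * \<beta> k' (snd p)) * P p \<omega> *
         cis (- (2 * pi / lam * (dx * real (fst m) * (sin (\<theta>x k (fst p) \<omega>) - sin (\<theta>x k' (snd p) \<omega>)) + dy * real (snd m) * (sin (\<theta>y k (fst p) \<omega>) - sin (\<theta>y k' (snd p) \<omega>)))))"
    if ll: "p \<in> LL" for p \<omega> m
      unfolding Psimp[OF ll] steer_def exp_i_cis
      apply (simp add: cis_cnj mult_ac cis_mult)
      apply (intro disjI2 arg_cong[where f=cis])
      using \<open>lam > 0\<close> apply (simp add: field_simps)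
      done
  have hterm: "cnj (h k \<omega> m) * h k' \<omega> m = (\<Sum>p\<in>LL. of_real (\<beta> k (fst p) * \<beta> k' (snd p)) * P p \<omega> *
     cis (- (2 * pi / lam * (dx * real (fst m) * (sin (\<theta>x k (fst p) \<omega>) - sin (\<theta>x k' (snd p) \<omega>))
                             + dy * real (snd m) * (sin (\<theta>y k (fst p) \<omega>) - sin (\<theta>y k' (snd p) \<omega>))))))" for \<omega> m
    unfolding h_def cnj_sum sum_product sum.cartesian_product LL_def[symmetric]
    apply (intro sum.cong refl)
    apply (simp only: split_beta hterm1)
    done
  have Zexp: "Z \<omega> = (\<Sum>p\<in>LL. of_real (c p) * P p \<omega> * gA p (\<Theta> \<omega>))" for \<omega>
  proof -
    have "Z \<omega> = 1 / of_nat (Mx * My) * (\<Sum>p\<in>LL. \<Sum>m\<in>MS. of_real (\<beta> k (fst p) * \<beta> k' (snd p)) * P p \<omega> *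
     cis (- (2 * pi / lam * (dx * real (fst m) * (sin (\<theta>x k (fst p) \<omega>) - sin (\<theta>x k' (snd p) \<omega>))
                             + dy * real (snd m) * (sin (\<theta>y k (fst p) \<omega>) - sin (\<theta>y k' (snd p) \<omega>))))))"
      unfolding Z_def hterm MS_def[symmetric] by (subst sum.swap) (rule refl)
    also have "\<dots> = (\<Sum>p\<in>LL. of_real (c p) * P p \<omega> * gA p (\<Theta> \<omega>))"
      unfolding sum_distrib_left by (intro sum.cong refl) (simp add: gAT c_def sum_distrib_left mult_ac)
    finally show ?thesis .
  qed
  have KEYP: "(\<integral>\<omega>. P p \<omega> * g (\<Theta> \<omega>) \<partial>M) = (if \<forall>i\<in>I. nP p i = 0 then 1 else 0) * (\<integral>\<omega>. g (\<Theta> \<omega>) \<partial>M)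
      \<and> integrable M (\<lambda>\<omega>. P p \<omega> * g (\<Theta> \<omega>))"
    if "g \<in> borel_measurable (PiM (UNIV \<times> I) (\<lambda>_. borel))" "\<And>x. norm (g x) \<le> B" for p g B
    unfolding P_def by (rule KEY[OF that])
  define nPP where "nPP = (\<lambda>p q i. nP p i - nP q i)"
  have PPc: "P p \<omega> * cnj (P q \<omega>) = exp (\<i> * of_real (\<Sum>i\<in>I. of_int (nPP p q i) * \<phi> (fst i) (snd i) \<omega>))" for p q \<omega>
  proof -
    have "(\<Sum>i\<in>I. of_int (nPP p q i) * \<phi> (fst i) (snd i) \<omega>)
        = (\<Sum>i\<in>I. of_int (nP p i) * \<phi> (fst i) (snd i) \<omega>) - (\<Sum>i\<in>I. of_int (nP q i) * \<phi> (fst i) (snd i) \<omega>)"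
      unfolding nPP_def sum_subtractf[symmetric] by (simp add: left_diff_distrib)
    then show ?thesis unfolding P_def exp_i_cis by (simp add: cis_cnj cis_mult)
  qed
  have KEYPQ: "(\<integral>\<omega>. P p \<omega> * cnj (P q \<omega>) * g (\<Theta> \<omega>) \<partial>M) = (if \<forall>i\<in>I. nPP p q i = 0 then 1 else 0) * (\<integral>\<omega>. g (\<Theta> \<omega>) \<partial>M)
      \<and> integrable M (\<lambda>\<omega>. P p \<omega> * cnj (P q \<omega>) * g (\<Theta> \<omega>))"
    if "g \<in> borel_measurable (PiM (UNIV \<times> I) (\<lambda>_. borel))" "\<And>x. norm (g x) \<le> B" for p q g B
    unfolding PPc by (rule KEY[OF that])
  have nPnz: "\<not> (\<forall>i\<in>I. nP p i = 0)" if "p \<in> LL" for p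
  proof
    assume "\<forall>i\<in>I. nP p i = 0"
    moreover have "(k, fst p) \<in> I" using kI that unfolding LL_def by auto
    ultimately have "nP p (k, fst p) = 0" by blast
    then show False using \<open>k \<noteq> k'\<close> unfolding nP_def by (auto split: if_splits)
  qed
  have nPPz: "(\<forall>i\<in>I. nPP p q i = 0) \<longleftrightarrow> p = q" if "p \<in> LL" "q \<in> LL" for p q
  proof
    assume H: "\<forall>i\<in>I. nPP p q i = 0"
    have "(k, fst q) \<in> I" "(k', snd q) \<in> I" using kI k'I that unfolding LL_def by auto
    with H have "nPP p q (k, fst q) = 0" "nPP p q (k', snd q) = 0" by blast+
    then show "p = q" using \<open>k \<noteq> k'\<close> unfolding nPP_def nP_def by (auto split: if_splits simp: prod_eq_iff)
  qed (simp add: nPP_def)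
  have EZ: "(\<integral>\<omega>. Z \<omega> \<partial>M) = 0"
  proof -
    have "(\<integral>\<omega>. Z \<omega> \<partial>M) = (\<integral>\<omega>. (\<Sum>p\<in>LL. of_real (c p) * (P p \<omega> * gA p (\<Theta> \<omega>))) \<partial>M)"
      by (simp add: Zexp mult.assoc)
    also have "\<dots> = (\<Sum>p\<in>LL. of_real (c p) * (\<integral>\<omega>. P p \<omega> * gA p (\<Theta> \<omega>) \<partial>M))"
      by (subst Bochner_Integration.integral_sum) (auto intro!: integrable_mult_right KEYP[OF gAm gAb, THEN conjunct2])
    also have "\<dots> = 0"
      by (intro sum.neutral ballI) (simp add: KEYP[OF gAm gAb, THEN conjunct1] nPnz)
    finally show ?thesis .
  qed
  define gAA where "gAA = (\<lambda>p q x. gA p x * cnj (gA q x))"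
  have gAAm: "gAA p q \<in> borel_measurable (PiM (UNIV \<times> I) (\<lambda>_. borel))" if "p \<in> LL" "q \<in> LL" for p q
    unfolding gAA_def using gAm[OF that(1)] gAm[OF that(2)] by measurable
  have gAAb: "norm (gAA p q x) \<le> real (card MS) * real (card MS)" for p q x
    unfolding gAA_def norm_mult complex_mod_cnj by (intro mult_mono gAb) auto
  have ZZ: "Z \<omega> * cnj (Z \<omega>) = (\<Sum>p\<in>LL. \<Sum>q\<in>LL. of_real (c p * c q) * (P p \<omega> * cnj (P q \<omega>) * gAA p q (\<Theta> \<omega>)))" for \<omega>
    unfolding Zexp gAA_def cnj_sum sum_product by (intro sum.cong refl) (simp add: mult_ac)
  have EZ2: "of_real (\<integral>\<omega>. (cmod (Z \<omega>))\<^sup>2 \<partial>M) = (\<Sum>p\<in>LL. of_real ((c p)\<^sup>2) * (\<integral>\<omega>. gAA p p (\<Theta> \<omega>) \<partial>M))"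
  proof -
    have "of_real (\<integral>\<omega>. (cmod (Z \<omega>))\<^sup>2 \<partial>M) = (\<integral>\<omega>. Z \<omega> * cnj (Z \<omega>) \<partial>M)"
      by (simp only: integral_complex_of_real[symmetric] complex_norm_square)
    also have "\<dots> = (\<Sum>p\<in>LL. \<Sum>q\<in>LL. of_real (c p * c q) * (\<integral>\<omega>. P p \<omega> * cnj (P q \<omega>) * gAA p q (\<Theta> \<omega>) \<partial>M))"
    proof -
      have intF: "integrable M (\<lambda>\<omega>. of_real (c p * c q) * (P p \<omega> * cnj (P q \<omega>) * gAA p q (\<Theta> \<omega>)))"
        if "p \<in> LL" "q \<in> LL" for p q
        by (rule integrable_mult_right) (rule KEYPQ[OF gAAm[OF that] gAAb, THEN conjunct2])
      have "(\<integral>\<omega>. Z \<omega> * cnj (Z \<omega>) \<partial>M) = (\<Sum>p\<in>LL. (\<integral>\<omega>. (\<Sum>q\<in>LL. of_real (c p * c q) * (P p \<omega> * cnj (P q \<omega>) * gAA p q (\<Theta> \<omega>))) \<partial>M))"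
        unfolding ZZ
        apply (rule Bochner_Integration.integral_sum)
        apply (rule Bochner_Integration.integrable_sum)
        apply (rule intF)
        apply assumption+
        done
      also have "\<dots> = (\<Sum>p\<in>LL. \<Sum>q\<in>LL. of_real (c p * c q) * (\<integral>\<omega>. P p \<omega> * cnj (P q \<omega>) * gAA p q (\<Theta> \<omega>) \<partial>M))"
        apply (intro sum.cong refl)
        apply (subst Bochner_Integration.integral_sum)
        apply (rule intF, assumption, assumption)
        apply (intro sum.cong refl integral_mult_right_zero)
        done
      finally show ?thesis .
    qed
    also have "\<dots> = (\<Sum>p\<in>LL. \<Sum>q\<in>LL. if q = p then of_real (c p * c q) * (\<integral>\<omega>. gAA p q (\<Theta> \<omega>) \<partial>M) else 0)"
      by (intro sum.cong refl) (auto simp: KEYPQ[OF gAAm gAAb, THEN conjunct1] nPPz)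
    also have "\<dots> = (\<Sum>p\<in>LL. of_real ((c p)\<^sup>2) * (\<integral>\<omega>. gAA p p (\<Theta> \<omega>) \<partial>M))"
      using finLL by (simp add: power2_eq_square)
    finally show ?thesis .
  qed
  define ax where "ax = (\<lambda>(m1::nat\<times>nat) (m2::nat\<times>nat). - (2 * pi / lam * dx * (real (fst m1) - real (fst m2))))"
  define ay where "ay = (\<lambda>(m1::nat\<times>nat) (m2::nat\<times>nat). - (2 * pi / lam * dy * (real (snd m1) - real (snd m2))))"
  have EA2: "(\<integral>\<omega>. gAA p p (\<Theta> \<omega>) \<partial>M) = of_real (\<Sum>m1\<in>MS. \<Sum>m2\<in>MS. sinc (ax m1 m2 * \<alpha>x (fst p) (snd p)) * sinc (ay m1 m2 * \<alpha>y (fst p) (snd p)))"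
    if pL: "p \<in> LL" for p
  proof -
    obtain p1 p2 where pp: "p = (p1, p2)" by force
    with pL have p1: "p1 \<in> {1..L}" and p2: "p2 \<in> {1..L}" by (auto simp: LL_def)
    have [measurable]: "\<theta>x k p1 \<in> borel_measurable M" "\<theta>y k p1 \<in> borel_measurable M"
      "\<theta>x k' p2 \<in> borel_measurable M" "\<theta>y k' p2 \<in> borel_measurable M"
      using angles_rv[OF kI[OF p1]] angles_rv[OF k'I[OF p2]] by auto
    define Dx where "Dx = (\<lambda>\<omega>. sin (\<theta>x k p1 \<omega>) - sin (\<theta>x k' p2 \<omega>))"
    define Dy where "Dy = (\<lambda>\<omega>. sin (\<theta>y k p1 \<omega>) - sin (\<theta>y k' p2 \<omega>))"
    have Dxm[measurable]: "Dx \<in> borel_measurable M" and Dym[measurable]: "Dy \<in> borel_measurable M"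
      unfolding Dx_def Dy_def by measurable
    have indD: "indep_var borel Dx borel Dy"
      using diff_indep[OF p1 p2] unfolding Dx_def Dy_def .
    have eq: "gAA p p (\<Theta> \<omega>) = (\<Sum>m1\<in>MS. \<Sum>m2\<in>MS. exp (\<i> * of_real (ax m1 m2 * Dx \<omega>)) * exp (\<i> * of_real (ay m1 m2 * Dy \<omega>)))" for \<omega>
      unfolding gAA_def gAT[OF pL] cnj_sum sum_product
    proof (intro sum.cong refl)
      fix m1 m2
      show "cis (- (2 * pi / lam * (dx * real (fst m1) * (sin (\<theta>x k (fst p) \<omega>) - sin (\<theta>x k' (snd p) \<omega>)) + dy * real (snd m1) * (sin (\<theta>y k (fst p) \<omega>) - sin (\<theta>y k' (snd p) \<omega>))))) *
          cnj (cis (- (2 * pi / lam * (dx * real (fst m2) * (sin (\<theta>x k (fst p) \<omega>) - sin (\<theta>x k' (snd p) \<omega>)) + dy * real (snd m2) * (sin (\<theta>y k (fst p) \<omega>) - sin (\<theta>y k' (snd p) \<omega>)))))) =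
          exp (\<i> * of_real (ax m1 m2 * Dx \<omega>)) * exp (\<i> * of_real (ay m1 m2 * Dy \<omega>))"
        unfolding exp_i_cis cis_cnj cis_mult pp fst_conv snd_conv ax_def ay_def Dx_def Dy_def prod.case
        by (rule arg_cong[where f=cis]) (use \<open>lam > 0\<close> in \<open>simp add: field_simps\<close>)
    qed
    have tm: "(\<integral>\<omega>. exp (\<i> * of_real (a * Dx \<omega>)) * exp (\<i> * of_real (b * Dy \<omega>)) \<partial>M)
        = of_real (sinc (a * \<alpha>x p1 p2) * sinc (b * \<alpha>y p1 p2))" for a b
    proof -
      have ind2: "indep_var borel (\<lambda>\<omega>. exp (\<i> * of_real (a * Dx \<omega>))) borel (\<lambda>\<omega>. exp (\<i> * of_real (b * Dy \<omega>)))"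
        using indep_var_compose[OF indD, of "\<lambda>x. exp (\<i> * of_real (a * x))" borel "\<lambda>x. exp (\<i> * of_real (b * x))" borel]
        by (auto simp: comp_def intro!: borel_measurable_continuous_onI continuous_intros)
      have i1: "integrable M (\<lambda>\<omega>. exp (\<i> * of_real (a * Dx \<omega>)))"
        by (rule bounded_integrable[where B=1]) auto
      have i2: "integrable M (\<lambda>\<omega>. exp (\<i> * of_real (b * Dy \<omega>)))"
        by (rule bounded_integrable[where B=1]) auto
      have ax0: "\<alpha>x p1 p2 \<ge> 0" "\<alpha>y p1 p2 \<ge> 0" using alpha_range[OF p1 p2] by auto
      show ?thesis
        unfolding indep_var_lebesgue_integral[OF ind2 i1 i2]
        using E_sinc[OF Dxm diff_x[OF p1 p2, folded Dx_def] ax0(1), of a]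
              E_sinc[OF Dym diff_y[OF p1 p2, folded Dy_def] ax0(2), of b]
        by simp
    qed
    have "(\<integral>\<omega>. gAA p p (\<Theta> \<omega>) \<partial>M) = (\<Sum>m1\<in>MS. \<Sum>m2\<in>MS. \<integral>\<omega>. exp (\<i> * of_real (ax m1 m2 * Dx \<omega>)) * exp (\<i> * of_real (ay m1 m2 * Dy \<omega>)) \<partial>M)"
      unfolding eq
      apply (subst Bochner_Integration.integral_sum)
       apply (rule Bochner_Integration.integrable_sum)
       apply (rule bounded_integrable[where B=1])
        apply measurable
       apply (simp add: norm_mult)
      apply (intro sum.cong refl Bochner_Integration.integral_sum)
      apply (rule bounded_integrable[where B=1])
       apply measurable
      apply (simp add: norm_mult)
      done
    also have "\<dots> = of_real (\<Sum>m1\<in>MS. \<Sum>m2\<in>MS. sinc (ax m1 m2 * \<alpha>x (fst p) (snd p)) * sinc (ay m1 m2 * \<alpha>y (fst p) (snd p)))"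
      unfolding of_real_sum pp fst_conv snd_conv by (intro sum.cong refl tm)
    finally show ?thesis .
  qed
  have R: "(\<integral>\<omega>. (cmod (Z \<omega>))\<^sup>2 \<partial>M) = (\<Sum>p\<in>LL. (c p)\<^sup>2 * (\<Sum>m1\<in>MS. \<Sum>m2\<in>MS. sinc (ax m1 m2 * \<alpha>x (fst p) (snd p)) * sinc (ay m1 m2 * \<alpha>y (fst p) (snd p))))"
  proof -
    have "(of_real (\<integral>\<omega>. (cmod (Z \<omega>))\<^sup>2 \<partial>M) :: complex) = of_real (\<Sum>p\<in>LL. (c p)\<^sup>2 * (\<Sum>m1\<in>MS. \<Sum>m2\<in>MS. sinc (ax m1 m2 * \<alpha>x (fst p) (snd p)) * sinc (ay m1 m2 * \<alpha>y (fst p) (snd p))))"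
      unfolding EZ2 of_real_sum[of _ LL] of_real_mult by (intro sum.cong refl) (simp only: EA2)
    then show ?thesis by (simp only: of_real_eq_iff)
  qed
  have cv: "cvar M Z = (\<Sum>p\<in>LL. (c p)\<^sup>2 * (\<Sum>m1\<in>MS. \<Sum>m2\<in>MS. sinc (ax m1 m2 * \<alpha>x (fst p) (snd p)) * sinc (ay m1 m2 * \<alpha>y (fst p) (snd p))))"
    unfolding cvar_def EZ R by simp
  have term_eq: "(c p)\<^sup>2 * (\<Sum>m1\<in>MS. \<Sum>m2\<in>MS. sinc (ax m1 m2 * \<alpha>x (fst p) (snd p)) * sinc (ay m1 m2 * \<alpha>y (fst p) (snd p)))
        = (\<beta> k (fst p) * \<beta> k' (snd p))\<^sup>2 * eta (dx * \<alpha>x (fst p) (snd p) / lam) Mx * eta (dy * \<alpha>y (fst p) (snd p) / lam) My" for p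
  proof -
    have "(\<Sum>m1\<in>MS. \<Sum>m2\<in>MS. sinc (ax m1 m2 * \<alpha>x (fst p) (snd p)) * sinc (ay m1 m2 * \<alpha>y (fst p) (snd p)))
      = (\<Sum>a1\<in>{..<Mx}. \<Sum>a2\<in>{..<Mx}. sinc (2 * pi * (dx * \<alpha>x (fst p) (snd p) / lam) * (real a1 - real a2)))
      * (\<Sum>b1\<in>{..<My}. \<Sum>b2\<in>{..<My}. sinc (2 * pi * (dy * \<alpha>y (fst p) (snd p) / lam) * (real b1 - real b2)))"
      unfolding MS_def ax_def ay_def sinc_arg
      by (rule sum_sq_prod[of "\<lambda>a1 a2. sinc (2 * pi * (dx * \<alpha>x (fst p) (snd p) / lam) * (real a1 - real a2))"
                              "\<lambda>b1 b2. sinc (2 * pi * (dy * \<alpha>y (fst p) (snd p) / lam) * (real b1 - real b2))"])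
    then show ?thesis
      unfolding eta_def c_def
      using \<open>Mx > 0\<close> \<open>My > 0\<close> by (simp add: field_simps power2_eq_square)
  qed
  have fin: "(\<Sum>p\<in>LL. (c p)\<^sup>2 * (\<Sum>m1\<in>MS. \<Sum>m2\<in>MS. sinc (ax m1 m2 * \<alpha>x (fst p) (snd p)) * sinc (ay m1 m2 * \<alpha>y (fst p) (snd p))))
     = (\<Sum>l\<in>{1..L}. \<Sum>l'\<in>{1..L}. (\<beta> k l * \<beta> k' l')\<^sup>2
              * eta (dx * \<alpha>x l l' / lam) Mx * eta (dy * \<alpha>y l l' / lam) My)"
    unfolding term_eq unfolding LL_def sum.cartesian_product by (rule sum.cong[OF refl]) (simp add: split_beta)
  show ?thesis
    using cv fin unfolding Z_def by simp
qed

end
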